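(* Let $\Sigma$ be a finite alphabet, let $\mathcal D$ be a probability distribution over $\Sigma^\ast$, let $L_{\mathcal R}\subseteq\Sigma^\ast$ be the language of an RNN acceptor $\mathcal R$ (accessible only through membership queries $u\mapsto [u\in L_{\mathcal R}]$), let $\psi$ be an LTL formula (the query), and let $\varepsilon,\delta\in(0,1)$. Run the procedure LEXR described in the context on these inputs. Then the probability (over the random test words drawn by the verifier) that LEXR terminates and returns an LTL formula $\varphi$ which is not an $\varepsilon$-explanation for $\mathcal R$ and $\psi$ is at most $\delta$; i.e., whenever LEXR returns a formula $\varphi$, it is an $\varepsilon$-explanation, meaning $\mathbf P_{\mathcal D}\big(L(\varphi)\oplus(L_{\mathcal R}\cap L(\psi))\big)<\varepsilon$, with probability at least $1-\delta$.
   Context: Words are finite sequences over the finite alphabet $\Sigma$; $\Sigma^\ast$ is the set of all finite words, $\lambda$ the empty word. An RNN acceptor $\mathcal R$ is given abstractly by a state-update map $g:\mathbb R^{d_s}\times\Sigma\to\mathbb R^{d_s}$, an initial state $s_I$, and a classifier $f:\mathbb R^{d_s}\to\{0,1\}$; extending $g$ to words by $g^\ast(s,\lambda)=s$, $g^\ast(s,ua)=g(g^\ast(s,u),a)$, its language is $L(\mathcal R)=\{u\in\Sigma^\ast: f(g^\ast(s_I,u))=1\}$. LTL formulas are generated by $\varphi::= a\in\Sigma\mid\neg\varphi\mid\varphi\vee\varphi\mid \mathbf X\varphi\mid \varphi\,\mathbf U\,\varphi$ (with the usual abbreviations $\top,\bot,\wedge,\to,\mathbf F\varphi=\top\mathbf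 U\varphi,\mathbf G\varphi=\neg\mathbf F\neg\varphi$), interpreted over finite words $u=a_1\dots a_n$: $(u,i)\models a$ iff $a_i=a$; negation and disjunction as usual; $(u,i)\models\mathbf X\varphi$ iff $i<n$ and $(u,i+1)\models\varphi$; $(u,i)\models\varphi_1\mathbf U\varphi_2$ iff there is $j\in\{i,\dots,n\}$ with $(u,j)\models\varphi_2$ and $(u,k)\models\varphi_1$ for all $i\le k<j$. $u\models\varphi$ means $(u,1)\models\varphi$, and $L(\varphi)=\{u: u\models\varphi\}$. $\oplus$ denotes symmetric difference of languages. A formula $\varphi$ is an $\varepsilon$-explanation for $\mathcal R$ and $\psi$ if $\mathbf P_{\mathcal D}(\{u\in\Sigma^\ast: u\in L(\varphi)\oplus(L(\mathcal R)\cap L(\psi))\})<\varepsilon$. Procedure LEXR: maintain a finite sample $\mathcal S\subset\Sigma^\ast\times\{0,1\}$, initially empty. In iteration $i=1,2,\dots$: (1) the learner outputs an LTL formula $\varphi$ consistent with $\mathcal S$ (every $(u,1)\in\mathcal S$ satisfies $u\models\varphi$ and every $(u,0)\in\mathcal S$ satisfies $u\not\models\varphi$; the paper's learner picks one of minimal size via SAT solving); (2) the verifier draws a test suite $T_i$ of $r_i=\lceil\frac1\varepsilon(i\ln 2-\ln\delta)\rceil$ words independently according to $\mathcal D$ and checks whether some $u\in T_i$ lies in $L(\varphi)\oplus(L(\mathcal R)\cap L(\psi))$ (a counterexample); (3) if there is no counterexample, LEXR terminates and returns $\varphi$; otherwise the counterexample(s) $u$ are added to $\mathcal S$ with label $1$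 if $u\in L(\mathcal R)\cap L(\psi)$ and label $0$ otherwise, and the next iteration starts. LEXR need not terminate. *)

theory Defs
  imports "HOL-Probability.Probability"
begin

datatype 'a ltl = Atom 'a | Neg "'a ltl" | Or "'a ltl" "'a ltl"
  | Next "'a ltl" | Until "'a ltl" "'a ltl"

text \<open>Positions are 0-indexed: position i here is position i+1 of the paper.\<close>
fun sat :: "'a list \<Rightarrow> nat \<Rightarrow> 'a ltl \<Rightarrow> bool" where
  "sat u i (Atom a) = (i < length u \<and> u ! i = a)"
| "sat u i (Neg \<phi>) = (\<not> sat u i \<phi>)"
| "sat u i (Or \<phi> \<theta>) = (sat u i \<phi> \<or> sat u i \<theta>)"
| "sat u i (Next \<phi>) = (Suc i < length u \<and> sat u (Suc i) \<phi>)"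
| "sat u i (Until \<phi> \<theta>) =
     (\<exists>j. i \<le> j \<and> j < length u \<and> sat u j \<theta> \<and> (\<forall>k. i \<le> k \<and> k < j \<longrightarrow> sat u k \<phi>))"

definition models :: "'a list \<Rightarrow> 'a ltl \<Rightarrow> bool" where
  "models u \<phi> = sat u 0 \<phi>"

definition lang :: "'a ltl \<Rightarrow> 'a list set" where
  "lang \<phi> = {u. models u \<phi>}"

text \<open>State space \<open>real^'d\<close> (dimension d_s = CARD('d)); g^* is a left fold.\<close>
definition rnn_lang ::
  "(real^'d \<Rightarrow> 'a \<Rightarrow> real^'d) \<Rightarrow> real^'d \<Rightarrow> (real^'d \<Rightarrow> bool) \<Rightarrow> 'a list set" where
  "rnn_lang g sI f = {u. f (foldl g sI u)}"

definition symdiff :: "'b set \<Rightarrow> 'b set \<Rightarrow> 'b set" where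
  "symdiff A B = (A - B) \<union> (B - A)"

definition is_eps_explanation ::
  "'a list pmf \<Rightarrow> real \<Rightarrow> 'a list set \<Rightarrow> 'a ltl \<Rightarrow> 'a ltl \<Rightarrow> bool" where
  "is_eps_explanation D eps LR \<psi> \<phi> =
     (measure_pmf.prob D (symdiff (lang \<phi>) (LR \<inter> lang \<psi>)) < eps)"

definition consistent :: "'a ltl \<Rightarrow> ('a list \<times> bool) set \<Rightarrow> bool" where
  "consistent \<phi> S = (\<forall>(u, b) \<in> S. models u \<phi> = b)"

text \<open>Size r_i of the test suite of iteration i (1-indexed as in the paper).\<close>
definition test_size :: "real \<Rightarrow> real \<Rightarrow> nat \<Rightarrow> nat" where
  "test_size eps delta i = nat \<lceil>(1 / eps) * (real i * ln 2 - ln delta)\<rceil>"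

text \<open>All test words are drawn i.i.d. from D; we read them off consecutively from a
  single random stream \<open>\<omega>\<close>. Iterations are 0-indexed here (iteration k is paper's k+1).\<close>
definition suite_offset :: "real \<Rightarrow> real \<Rightarrow> nat \<Rightarrow> nat" where
  "suite_offset eps delta k = (\<Sum>j<k. test_size eps delta (Suc j))"

definition test_suite :: "real \<Rightarrow> real \<Rightarrow> 'b stream \<Rightarrow> nat \<Rightarrow> 'b list" where
  "test_suite eps delta \<omega> k =
     stake (test_size eps delta (Suc k)) (sdrop (suite_offset eps delta k) \<omega>)"

definition is_cex :: "'a list set \<Rightarrow> 'a ltl \<Rightarrow> 'a list \<Rightarrow> bool" where
  "is_cex target \<phi> u = (u \<in> symdiff (lang \<phi>) target)"

fun lexr_sample ::
  "(('a list \<times> bool) set \<Rightarrow> 'a ltl) \<Rightarrow> 'a list set \<Rightarrow> real \<Rightarrow> real \<Rightarrow> 'a list stream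
     \<Rightarrow> nat \<Rightarrow> ('a list \<times> bool) set" where
  "lexr_sample learner target eps delta \<omega> 0 = {}"
| "lexr_sample learner target eps delta \<omega> (Suc k) =
     lexr_sample learner target eps delta \<omega> k \<union>
     {(u, u \<in> target) | u. u \<in> set (test_suite eps delta \<omega> k) \<and>
        is_cex target (learner (lexr_sample learner target eps delta \<omega> k)) u}"

definition lexr_hyp where
  "lexr_hyp learner target eps delta \<omega> k = learner (lexr_sample learner target eps delta \<omega> k)"

definition lexr_has_cex where
  "lexr_has_cex learner target eps delta \<omega> k =
     (\<exists>u \<in> set (test_suite eps delta \<omega> k).
        is_cex target (lexr_hyp learner target eps delta \<omega> k) u)"

definition lexr_returns where
  "lexr_returns learner target eps delta \<omega> \<phi> =
     (\<exists>k. (\<forall>j<k. lexr_has_cex learner target eps delta \<omega> j) \<and>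
          \<not> lexr_has_cex learner target eps delta \<omega> k \<and>
          \<phi> = lexr_hyp learner target eps delta \<omega> k)"

end

theory Submission imports Defs begin

lemma space_SD[simp]: "space (stream_space (measure_pmf D)) = UNIV"
  by (simp add: space_stream_space)

lemma stake_sets:
  fixes D :: "'b::countable pmf"
  shows "stake n -` A \<in> sets (stream_space (measure_pmf D))"
proof -
  have "stake n \<in> measurable (stream_space (measure_pmf D)) (count_space UNIV)"
    using measurable_stake
    by (subst measurable_cong_sets[OF sets_stream_space_cong[OF sets_measure_pmf_count_space] refl])
  then have "stake n -` A \<inter> space (stream_space (measure_pmf D)) \<in> sets (stream_space (measure_pmf D))"
    by (rule measurable_sets) simp
  then show ?thesis by simp
qed

lemma shd_sets: "{\<omega>. shd \<omega> = t} \<in> sets (stream_space (measure_pmf D))"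
proof -
  have "shd -` {t} \<inter> space (stream_space (measure_pmf D)) \<in> sets (stream_space (measure_pmf D))"
    by (rule measurable_sets[OF measurable_shd]) simp
  then show ?thesis by (simp add: vimage_def)
qed

lemma stl_sets: "Y \<in> sets (stream_space (measure_pmf D)) \<Longrightarrow> stl -` Y \<in> sets (stream_space (measure_pmf D))"
  using measurable_sets[OF measurable_stl, of Y "measure_pmf D"] by simp

lemma prefix_bound:
  fixes D :: "'b::countable pmf"
  assumes "\<And>xs. {\<omega>. \<Phi> xs \<omega>} \<in> sets (stream_space (measure_pmf D))"
    and "\<And>xs. emeasure (stream_space (measure_pmf D)) {\<omega>. \<Phi> xs \<omega>} \<le> c"
  shows "{\<omega>. \<Phi> (stake n \<omega>) (sdrop n \<omega>)} \<in> sets (stream_space (measure_pmf D)) \<and>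
         emeasure (stream_space (measure_pmf D)) {\<omega>. \<Phi> (stake n \<omega>) (sdrop n \<omega>)} \<le> c"
  using assms
proof (induction n arbitrary: \<Phi>)
  case 0
  then show ?case by simp
next
  case (Suc n)
  let ?S = "stream_space (measure_pmf D)"
  let ?Y = "\<lambda>t. {\<omega>. \<Phi> (t # stake n \<omega>) (sdrop n \<omega>)}"
  have Y: "?Y t \<in> sets ?S \<and> emeasure ?S (?Y t) \<le> c" for t
    using Suc.IH[of "\<lambda>xs. \<Phi> (t # xs)"] Suc.prems by auto
  have eq: "{\<omega>. \<Phi> (stake (Suc n) \<omega>) (sdrop (Suc n) \<omega>)} = (\<Union>t. {\<omega>. shd \<omega> = t} \<inter> stl -` ?Y t)"
    by auto
  have meas: "{\<omega>. \<Phi> (stake (Suc n) \<omega>) (sdrop (Suc n) \<omega>)} \<in> sets ?S"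
  proof -
    have "stl -` ?Y t \<in> sets ?S" for t using Y stl_sets by blast
    then show ?thesis unfolding eq by (intro sets.countable_UN sets.Int shd_sets) auto
  qed
  have "emeasure ?S {\<omega>. \<Phi> (stake (Suc n) \<omega>) (sdrop (Suc n) \<omega>)}
      = (\<integral>\<^sup>+t. emeasure ?S {x\<in>space ?S. t ## x \<in> {\<omega>. \<Phi> (stake (Suc n) \<omega>) (sdrop (Suc n) \<omega>)}} \<partial>measure_pmf D)"
    by (rule prob_space.emeasure_stream_space[OF prob_space_measure_pmf meas])
  also have "\<dots> = (\<integral>\<^sup>+t. emeasure ?S (?Y t) \<partial>measure_pmf D)" by simp
  also have "\<dots> \<le> (\<integral>\<^sup>+t. c \<partial>measure_pmf D)" by (rule nn_integral_mono) (use Y in auto)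
  also have "\<dots> = c" by simp
  finally show ?case using meas by simp
qed

lemma stake_subset_emeasure:
  fixes D :: "'b::countable pmf"
  shows "emeasure (stream_space (measure_pmf D)) {\<omega>. set (stake r \<omega>) \<subseteq> C} = emeasure (measure_pmf D) C ^ r"
proof (induction r)
  case 0
  interpret prob_space "stream_space (measure_pmf D)"
    by (rule prob_space.prob_space_stream_space[OF prob_space_measure_pmf])
  show ?case using emeasure_space_1 by simp
next
  case (Suc r)
  let ?S = "stream_space (measure_pmf D)"
  have meas: "{\<omega>. set (stake (Suc r) \<omega>) \<subseteq> C} \<in> sets ?S"
    using stake_sets[of "Suc r" "{xs. set xs \<subseteq> C}" D] by (simp add: vimage_def)
  have "emeasure ?S {\<omega>. set (stake (Suc r) \<omega>) \<subseteq> C}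
      = (\<integral>\<^sup>+t. emeasure ?S {x\<in>space ?S. t ## x \<in> {\<omega>. set (stake (Suc r) \<omega>) \<subseteq> C}} \<partial>measure_pmf D)"
    by (rule prob_space.emeasure_stream_space[OF prob_space_measure_pmf meas])
  also have "\<dots> = (\<integral>\<^sup>+t. emeasure (measure_pmf D) C ^ r * indicator C t \<partial>measure_pmf D)"
    by (rule nn_integral_cong) (auto simp: Suc.IH indicator_def)
  also have "\<dots> = emeasure (measure_pmf D) C ^ Suc r"
    by (subst nn_integral_cmult_indicator) (auto simp: mult.commute)
  finally show ?case .
qed

lemma real_bound:
  fixes eps delta :: real
  assumes "0 < eps" "eps < 1" "0 < delta" "delta < 1"
  shows "(1 - eps) ^ test_size eps delta (Suc k) \<le> delta / 2 ^ Suc k"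
proof -
  define t where "t = real (Suc k) * ln 2 - ln delta"
  have "ln delta < 0" using assms by simp
  moreover have "ln (2::real) > 0" by simp
  moreover have "real (Suc k) * ln 2 > 0" using \<open>ln (2::real) > 0\<close> by simp
  ultimately have tpos: "t > 0" unfolding t_def by linarith
  define r where "r = test_size eps delta (Suc k)"
  have "r = nat \<lceil>t / eps\<rceil>" unfolding r_def test_size_def t_def by simp
  then have r: "real r \<ge> t / eps" using real_nat_ceiling_ge by simp
  have "eps * real r \<ge> t" using r assms(1) by (simp add: field_simps)
  have "(1 - eps) ^ r \<le> exp (- eps) ^ r"
    using assms by (intro power_mono) (auto intro: order.trans[OF _ exp_ge_add_one_self])
  also have "\<dots> = exp (- (eps * real r))" by (simp add: exp_of_nat_mult[symmetric] mult.commute)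
  also have "\<dots> \<le> exp (- t)" using \<open>eps * real r \<ge> t\<close> by simp
  also have "exp (- t) = delta / 2 ^ Suc k"
  proof -
    have "exp (real (Suc k) * ln 2) = 2 ^ Suc k"
      by (metis exp_ln exp_of_nat_mult zero_less_numeral)
    then show ?thesis unfolding t_def using assms
      by (simp add: exp_diff)
  qed
  finally show ?thesis unfolding r_def .
qed

lemma N_Suc: "suite_offset e d (Suc k) = suite_offset e d k + test_size e d (Suc k)"
  by (simp add: suite_offset_def)

lemma N_mono: "j \<le> k \<Longrightarrow> suite_offset e d j \<le> suite_offset e d k"
  unfolding suite_offset_def by (rule sum_mono2) auto

lemma test_suite_alt: "test_suite e d \<omega> k = drop (suite_offset e d k) (stake (suite_offset e d (Suc k)) \<omega>)"
  by (simp add: test_suite_def drop_stake N_Suc)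

lemma test_suite_dep:
  assumes "stake n \<omega> = stake n \<omega>'" "suite_offset e d (Suc k) \<le> n"
  shows "test_suite e d \<omega> k = test_suite e d \<omega>' k"
proof -
  have "stake (suite_offset e d (Suc k)) \<omega> = stake (suite_offset e d (Suc k)) \<omega>'"
    by (metis assms min.absorb1 take_stake)
  then show ?thesis by (simp add: test_suite_alt)
qed

lemma sample_dep:
  assumes "stake n \<omega> = stake n \<omega>'"
  shows "suite_offset e d k \<le> n \<Longrightarrow> lexr_sample l t e d \<omega> k = lexr_sample l t e d \<omega>' k"
proof (induction k)
  case 0
  then show ?case by simp
next
  case (Suc k)
  have "suite_offset e d k \<le> n" using Suc.prems N_mono[of k "Suc k" e d] by simp
  then have IH: "lexr_sample l t e d \<omega> k = lexr_sample l t e d \<omega>' k" using Suc.IH by simp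
  have "test_suite e d \<omega> k = test_suite e d \<omega>' k" using test_suite_dep[OF assms Suc.prems] .
  then show ?case using IH by simp
qed

lemma hyp_dep:
  "stake n \<omega> = stake n \<omega>' \<Longrightarrow> suite_offset e d k \<le> n \<Longrightarrow>
     lexr_hyp l t e d \<omega> k = lexr_hyp l t e d \<omega>' k"
  unfolding lexr_hyp_def using sample_dep by metis

lemma cex_dep:
  assumes "stake n \<omega> = stake n \<omega>'" "suite_offset e d (Suc k) \<le> n"
  shows "lexr_has_cex l t e d \<omega> k = lexr_has_cex l t e d \<omega>' k"
proof -
  have "suite_offset e d k \<le> n" using assms(2) N_mono[of k "Suc k" e d] by simp
  then show ?thesis unfolding lexr_has_cex_def
    using hyp_dep[OF assms(1)] test_suite_dep[OF assms] by metis
qed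

theorem mainTheorem1:
  fixes D :: "'a::finite list pmf"
    and g :: "real^'d \<Rightarrow> 'a \<Rightarrow> real^'d" and sI :: "real^'d" and f :: "real^'d \<Rightarrow> bool"
    and \<psi> :: "'a ltl"
    and learner :: "('a list \<times> bool) set \<Rightarrow> 'a ltl"
    and eps delta :: real
  assumes eps: "0 < eps" "eps < 1"
    and delta: "0 < delta" "delta < 1"
    and learner: "\<And>S. finite S \<Longrightarrow>
        (\<forall>(u, b) \<in> S. b = (u \<in> rnn_lang g sI f \<inter> lang \<psi>)) \<Longrightarrow> consistent (learner S) S"
  shows "{\<omega> \<in> space (stream_space (measure_pmf D)).
            \<exists>\<phi>. lexr_returns learner (rnn_lang g sI f \<inter> lang \<psi>) eps delta \<omega> \<phi> \<and>
                 \<not> is_eps_explanation D eps (rnn_lang g sI f) \<psi> \<phi>}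
           \<in> sets (stream_space (measure_pmf D))
       \<and> measure (stream_space (measure_pmf D))
           {\<omega> \<in> space (stream_space (measure_pmf D)).
            \<exists>\<phi>. lexr_returns learner (rnn_lang g sI f \<inter> lang \<psi>) eps delta \<omega> \<phi> \<and>
                 \<not> is_eps_explanation D eps (rnn_lang g sI f) \<psi> \<phi>} \<le> delta"
proof -
  let ?S = "stream_space (measure_pmf D)"
  define T where "T = rnn_lang g sI f \<inter> lang \<psi>"
  define N where "N = suite_offset eps delta"
  define ext :: "'a list list \<Rightarrow> 'a list stream" where "ext xs = xs @- sconst undefined" for xs
  define bad where "bad \<phi> = (\<not> is_eps_explanation D eps (rnn_lang g sI f) \<psi> \<phi>)" for \<phi>
  define hc where "hc = lexr_has_cex learner T eps delta"
  define hy where "hy = lexr_hyp learner T eps delta"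
  define Bk where "Bk k = {\<omega>. (\<forall>j<k. hc \<omega> j) \<and> \<not> hc \<omega> k \<and> bad (hy \<omega> k)}" for k
  define B where "B = {\<omega> \<in> space ?S. \<exists>\<phi>. lexr_returns learner T eps delta \<omega> \<phi> \<and> bad \<phi>}"
  have ext_stake: "stake n (ext (stake n \<omega>)) = stake n \<omega>" for n \<omega>
    by (simp add: ext_def stake_shift)
  have Beq: "B = (\<Union>k. Bk k)"
    unfolding B_def Bk_def lexr_returns_def hc_def hy_def by auto
  have Bk_alt: "Bk k = stake (N (Suc k)) -` {xs. ext xs \<in> Bk k}" for k
  proof -
    have "\<omega> \<in> Bk k \<longleftrightarrow> ext (stake (N (Suc k)) \<omega>) \<in> Bk k" for \<omega>
    proof -
      let ?n = "N (Suc k)"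
      have st: "stake ?n \<omega> = stake ?n (ext (stake ?n \<omega>))" using ext_stake by simp
      have "hc \<omega> j = hc (ext (stake ?n \<omega>)) j" if "j \<le> k" for j
        unfolding hc_def by (rule cex_dep[OF st]) (use that N_mono in \<open>auto simp: N_def\<close>)
      moreover have "hy \<omega> k = hy (ext (stake ?n \<omega>)) k"
        unfolding hy_def by (rule hyp_dep[OF st]) (use N_mono in \<open>auto simp: N_def\<close>)
      ultimately show ?thesis unfolding Bk_def by auto
    qed
    then show ?thesis by auto
  qed
  have Bk_sets: "Bk k \<in> sets ?S" for k
    by (subst Bk_alt) (rule stake_sets)
  have B_sets: "B \<in> sets ?S"
    unfolding Beq using Bk_sets by (intro sets.countable_UN) auto
  have Bk_bound: "emeasure ?S (Bk k) \<le> ennreal (delta / 2 ^ Suc k)" for k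
  proof -
    define r where "r = test_size eps delta (Suc k)"
    define H where "H xs = hy (ext xs) k" for xs
    define A where "A \<phi> = symdiff (lang \<phi>) T" for \<phi>
    define \<Phi> where "\<Phi> xs \<omega>' = (bad (H xs) \<and> set (stake r \<omega>') \<subseteq> - A (H xs))" for xs \<omega>'
    have sub: "Bk k \<subseteq> {\<omega>. \<Phi> (stake (N k) \<omega>) (sdrop (N k) \<omega>)}"
    proof
      fix \<omega> assume w: "\<omega> \<in> Bk k"
      have st: "stake (N k) \<omega> = stake (N k) (ext (stake (N k) \<omega>))" using ext_stake by simp
      have hyeq: "hy \<omega> k = H (stake (N k) \<omega>)"
        unfolding H_def hy_def by (rule hyp_dep[OF st]) (simp add: N_def)
      have ts: "test_suite eps delta \<omega> k = stake r (sdrop (N k) \<omega>)"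
        by (simp add: test_suite_def r_def N_def)
      show "\<omega> \<in> {\<omega>. \<Phi> (stake (N k) \<omega>) (sdrop (N k) \<omega>)}"
        using w unfolding Bk_def \<Phi>_def hc_def lexr_has_cex_def
        by (auto simp: hyeq[symmetric] ts[symmetric] A_def is_cex_def hy_def)
    qed
    have each: "{\<omega>. \<Phi> xs \<omega>} \<in> sets ?S \<and> emeasure ?S {\<omega>. \<Phi> xs \<omega>} \<le> ennreal (delta / 2 ^ Suc k)" for xs
    proof (cases "bad (H xs)")
      case False
      then show ?thesis by (simp add: \<Phi>_def)
    next
      case True
      have eq: "{\<omega>. \<Phi> xs \<omega>} = stake r -` {ys. set ys \<subseteq> - A (H xs)}"
        using True by (auto simp: \<Phi>_def)
      have m: "measure_pmf.prob D (A (H xs)) \<ge> eps"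
        using True unfolding bad_def is_eps_explanation_def A_def T_def by simp
      have "emeasure ?S {\<omega>. \<Phi> xs \<omega>} = emeasure (measure_pmf D) (- A (H xs)) ^ r"
        using stake_subset_emeasure[of D r "- A (H xs)"] True by (simp add: \<Phi>_def)
      also have "emeasure (measure_pmf D) (- A (H xs)) = ennreal (1 - measure_pmf.prob D (A (H xs)))"
        using measure_pmf.prob_compl[of "A (H xs)" D]
        by (simp add: measure_pmf.emeasure_eq_measure Compl_eq_Diff_UNIV)
      also have "\<dots> ^ r = ennreal ((1 - measure_pmf.prob D (A (H xs))) ^ r)"
        by (rule ennreal_power) simp
      also have "\<dots> \<le> ennreal ((1 - eps) ^ r)"
        using m by (intro ennreal_leI power_mono) simp_all
      also have "\<dots> \<le> ennreal (delta / 2 ^ Suc k)"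
        unfolding r_def by (rule ennreal_leI real_bound[OF eps delta])+
      finally show ?thesis using eq stake_sets by metis
    qed
    have "emeasure ?S (Bk k) \<le> emeasure ?S {\<omega>. \<Phi> (stake (N k) \<omega>) (sdrop (N k) \<omega>)}"
      using sub prefix_bound[of \<Phi> D, OF conjunct1[OF each] conjunct2[OF each]]
      by (intro emeasure_mono) auto
    also have "\<dots> \<le> ennreal (delta / 2 ^ Suc k)"
      using prefix_bound[of \<Phi> D, OF conjunct1[OF each] conjunct2[OF each]] by blast
    finally show ?thesis .
  qed
  have sums: "(\<lambda>k. delta / 2 ^ Suc k) sums delta"
    using sums_mult[OF power_half_series, of delta] by (simp add: power_divide)
  have "emeasure ?S B \<le> (\<Sum>k. emeasure ?S (Bk k))"
    unfolding Beq by (rule emeasure_subadditive_countably) (use Bk_sets in auto)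
  also have "\<dots> \<le> (\<Sum>k. ennreal (delta / 2 ^ Suc k))"
    by (intro suminf_le Bk_bound) auto
  also have "\<dots> = ennreal delta"
    using sums delta by (subst suminf_ennreal2) (auto simp: sums_iff)
  finally have le: "emeasure ?S B \<le> ennreal delta" .
  interpret P: prob_space ?S
    by (rule prob_space.prob_space_stream_space[OF prob_space_measure_pmf])
  have "measure ?S B \<le> delta"
    using le delta by (simp add: P.emeasure_eq_measure)
  then show ?thesis using B_sets unfolding B_def bad_def T_def by simp
qed

end
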